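(* Let $A,r,a,\mu>0$ and $0<\beta_0<1$, and consider the system $$\dot S = S(A-S)-\beta_0 IS,\qquad \dot I=\beta_0 IS-\mu I-\frac{rI}{a+I}.$$ Let $\Delta=\big(a\beta_0+A-\frac{\mu}{\beta_0}\big)^2-4r$, assume $\Delta>0$, and let $$S_3=\tfrac12\Big(a\beta_0+A+\tfrac{\mu}{\beta_0}-\sqrt\Delta\Big),\quad S_4=\tfrac12\Big(a\beta_0+A+\tfrac{\mu}{\beta_0}+\sqrt\Delta\Big),\quad E_j=\Big(S_j,\frac{A-S_j}{\beta_0}\Big)\ (j=3,4),$$ and assume $S_3<S_4<A$. Then the endemic equilibrium $E_3$ is a sink and the endemic equilibrium $E_4$ is a saddle.
   Context: $\mu$ denotes the total death rate of infectious individuals. $E_3,E_4$ are the endemic equilibria (zeros of the vector field with $I\neq 0$). A sink is an equilibrium whose Jacobian eigenvalues all have negative real part; a saddle is an equilibrium whose Jacobian has two real eigenvalues of opposite signs. *)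

theory Defs
  imports "HOL-Analysis.Analysis"
begin

definition si_field :: "real \<Rightarrow> real \<Rightarrow> real \<Rightarrow> real \<Rightarrow> real \<Rightarrow> real^2 \<Rightarrow> real^2" where
  "si_field A r a \<mu> \<beta>\<^sub>0 x =
     (let S = x$1; I = x$2 in
      vector [S * (A - S) - \<beta>\<^sub>0 * I * S, \<beta>\<^sub>0 * I * S - \<mu> * I - r * I / (a + I)])"

definition state :: "real \<Rightarrow> real \<Rightarrow> real^2" where
  "state S I = vector [S, I]"

definition cmat :: "real^'n^'n \<Rightarrow> complex^'n^'n" where
  "cmat M = (\<chi> i j. complex_of_real (M$i$j))"

definition is_eigenvalue :: "real^'n^'n \<Rightarrow> complex \<Rightarrow> bool" where
  "is_eigenvalue M z \<longleftrightarrow> det (mat z - cmat M) = 0"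

definition is_sink :: "(real^2 \<Rightarrow> real^2) \<Rightarrow> real^2 \<Rightarrow> bool" where
  "is_sink F E \<longleftrightarrow> F E = 0 \<and> (\<forall>z. is_eigenvalue (jacobian F (at E)) z \<longrightarrow> Re z < 0)"

definition is_saddle :: "(real^2 \<Rightarrow> real^2) \<Rightarrow> real^2 \<Rightarrow> bool" where
  "is_saddle F E \<longleftrightarrow> F E = 0 \<and> (\<exists>l1 l2::real. l1 < 0 \<and> 0 < l2 \<and>
      is_eigenvalue (jacobian F (at E)) (complex_of_real l1) \<and>
      is_eigenvalue (jacobian F (at E)) (complex_of_real l2))"

end

theory Submission
  imports Defs
begin
lemma vec2: "(vector [p, q] :: real^2) = p *\<^sub>R axis 1 1 + q *\<^sub>R axis 2 1"
  by (simp add: vec_eq_iff forall_2 axis_def)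
lemma dnth: "((\<lambda>x::real^2. x$i) has_derivative (\<lambda>h. h$i)) F"
  by (simp add: bounded_linear_imp_has_derivative bounded_linear_vec_nth)
lemma aux: "(a::real) + y \<noteq> 0 \<Longrightarrow> b*h*w + (r*y*(inverse (a+y) * h * inverse (a+y)) - r*h/(a+y) - m*h) = (b*w - m - r*a/(a+y)^2) * h"
proof -
  assume u: "a + y \<noteq> 0"
  define u where "u = a + y"
  have y: "y = u - a" by (simp add: u_def)
  have "u \<noteq> 0" using u u_def by simp
  then show ?thesis unfolding u_def[symmetric] y
    by (simp add: field_simps power2_eq_square)
qed

lemma dsi:
  fixes x :: "real^2"
  assumes "a + x$2 \<noteq> 0"
  shows "(si_field A r a \<mu> \<beta> has_derivative (\<lambda>h.
     ((A - 2 * x$1 - \<beta> * x$2) * h$1 + (- \<beta> * x$1) * h$2) *\<^sub>R axis 1 1 +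
     ((\<beta> * x$2) * h$1 + (\<beta> * x$1 - \<mu> - r * a / (a + x$2)^2) * h$2) *\<^sub>R axis 2 1)) (at x)"
proof -
  have e: "si_field A r a \<mu> \<beta> = (\<lambda>x. (x$1 * (A - x$1) - \<beta> * x$2 * x$1) *\<^sub>R axis 1 1 +
     (\<beta> * x$2 * x$1 - \<mu> * x$2 - r * x$2 / (a + x$2)) *\<^sub>R axis 2 1)"
    by (rule ext) (simp add: si_field_def vec2 Let_def)
  show ?thesis unfolding e
    apply (rule has_derivative_eq_rhs)
     apply (rule derivative_eq_intros dnth refl assms)+
    apply (rule ext)
    using assms apply (simp add: vec_eq_iff forall_2 axis_def)
    apply (intro conjI)
     apply (simp add: algebra_simps)
    apply (rule aux)
    apply assumption

    done
qed
lemma jac: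
  fixes x :: "real^2" and A r a \<mu> \<beta> :: real
  assumes "a + x$2 \<noteq> 0"
  defines "M \<equiv> jacobian (si_field A r a \<mu> \<beta>) (at x)"
  shows "M$1$1 = A - 2 * x$1 - \<beta> * x$2" "M$1$2 = - \<beta> * x$1"
        "M$2$1 = \<beta> * x$2" "M$2$2 = \<beta> * x$1 - \<mu> - r * a / (a + x$2)^2"
  unfolding M_def jacobian_def frechet_derivative_at[OF dsi[OF assms(1)], symmetric]
  by (simp_all add: matrix_def axis_def)

lemma eig2:
  fixes M :: "real^2^2"
  shows "is_eigenvalue M z \<longleftrightarrow>
    z^2 - complex_of_real (M$1$1 + M$2$2) * z + complex_of_real (M$1$1*M$2$2 - M$1$2*M$2$1) = 0"
proof -
  have "det (mat z - cmat M) = z^2 - complex_of_real (M$1$1 + M$2$2) * z + complex_of_real (M$1$1*M$2$2 - M$1$2*M$2$1)"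
    by (simp add: det_2 cmat_def mat_def power2_eq_square algebra_simps)
  then show ?thesis by (simp add: is_eigenvalue_def)
qed

lemma sinkroots:
  fixes t d :: real
  assumes "t < 0" "d > 0" "z^2 - complex_of_real t * z + complex_of_real d = 0"
  shows "Re z < 0"
proof -
  obtain x y where z: "z = Complex x y" by (cases z)
  have re: "x^2 - y^2 - t*x + d = 0" and im: "2*x*y - t*y = 0"
    using arg_cong[OF assms(3), of Re] arg_cong[OF assms(3), of Im]
    by (simp_all add: z power2_eq_square)
  show ?thesis
  proof (cases "y = 0")
    case True
    then have "x^2 - t*x + d = 0" using re by simp
    then show ?thesis using assms(1,2) z
      by (smt (verit) mult_nonneg_nonneg mult_nonpos_nonneg zero_le_power2 complex.sel(1))
  next
    case False
    then have "2*x = t" using im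
      by (metis mult.commute mult_right_cancel right_diff_distrib' eq_iff_diff_eq_0 mult.assoc)
    then show ?thesis using z assms(1) by simp
  qed
qed

lemma saddleroots:
  fixes t d :: real
  assumes "d < 0"
  shows "\<exists>l1 l2::real. l1 < 0 \<and> 0 < l2 \<and>
     (complex_of_real l1)^2 - complex_of_real t * complex_of_real l1 + complex_of_real d = 0 \<and>
     (complex_of_real l2)^2 - complex_of_real t * complex_of_real l2 + complex_of_real d = 0"
proof -
  define q where "q = sqrt (t^2 - 4*d)"
  have h0: "t^2 - 4*d \<ge> 0" using assms by (smt (verit) zero_le_power2)
  then have q2: "q^2 = t^2 - 4*d" unfolding q_def by simp
  have qpos: "q \<ge> 0" unfolding q_def using h0 by simp
  have qt: "q > \<bar>t\<bar>"
  proof -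
    have "\<bar>t\<bar>^2 < q^2" using q2 assms by simp
    then show ?thesis using qpos by (smt (verit) power_mono abs_ge_zero)
  qed
  define l1 where "l1 = (t - q)/2"
  define l2 where "l2 = (t + q)/2"
  have e: "l^2 - t*l + d = 0" if "l = (t - q)/2 \<or> l = (t + q)/2" for l
  proof -
    have "l^2 - t*l + d = ((2*l - t)^2 - q^2)/4" using q2 by (simp add: power2_eq_square algebra_simps)
    moreover have "2*l - t = q \<or> 2*l - t = -q" using that by auto
    then have "(2*l - t)^2 = q^2" by auto
    ultimately show ?thesis by simp
  qed
  have c: "(complex_of_real l)^2 - complex_of_real t * complex_of_real l + complex_of_real d
      = complex_of_real (l^2 - t*l + d)" for l by simp
  show ?thesis
    apply (rule exI[of _ l1], rule exI[of _ l2])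
    using qt e[of l1] e[of l2] unfolding c l1_def l2_def by auto
qed

lemma endemic:
  fixes A r a \<mu> \<beta> S :: real
  assumes "a > 0" "r > 0" "\<mu> > 0" "0 < \<beta>" "\<beta> < 1" "S < A"
    and q: "(S - \<mu>/\<beta>) * (a*\<beta> + A - S) = r"
  defines "E \<equiv> state S ((A - S)/\<beta>)"
  defines "M \<equiv> jacobian (si_field A r a \<mu> \<beta>) (at E)"
  shows "si_field A r a \<mu> \<beta> E = 0"
    "M$1$1 + M$2$2 < 0"
    "M$1$1*M$2$2 - M$1$2*M$2$1 = S * ((A - S)/\<beta>) * \<beta>^2 * ((a*\<beta> + A - S)^2 - r) / (a*\<beta> + A - S)^2"
    "S > 0" "(A - S)/\<beta> > 0" "a*\<beta> + A - S > 0"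
proof -
  define I where "I = (A - S)/\<beta>"
  define w where "w = a*\<beta> + A - S"
  define u where "u = a + I"
  have Ipos: "I > 0" unfolding I_def using assms by simp
  have "a*\<beta> > 0" using assms by simp
  then have wpos: "w > 0" unfolding w_def using assms by linarith
  have upos: "u > 0" unfolding u_def using Ipos assms by simp
  have wu: "w = \<beta> * u" unfolding w_def u_def I_def using assms by (simp add: field_simps)
  have Sm: "S - \<mu>/\<beta> = r / w" using q wpos unfolding w_def[symmetric] by (simp add: field_simps)
  have Sm2: "\<beta>*S - \<mu> = r / u"
  proof -
    have "\<beta>*S - \<mu> = \<beta> * (S - \<mu>/\<beta>)" using assms by (simp add: field_simps)
    also have "\<dots> = r / u" using Sm wu assms upos by (simp add: field_simps)
    finally show ?thesis .
  qed
  have Spos: "S > 0"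
  proof -
    have "r / w > 0" using assms wpos by simp
    then have "S > \<mu>/\<beta>" using Sm by simp
    moreover have "\<mu>/\<beta> > 0" using assms by simp
    ultimately show ?thesis by simp
  qed
  have E1: "E$1 = S" and E2: "E$2 = I" unfolding E_def I_def state_def by simp_all
  have a2: "a + E$2 \<noteq> 0" using upos E2 u_def by simp
  note J = jac[OF a2, of A r \<mu> \<beta>, folded M_def, unfolded E1 E2 u_def[symmetric]]
  have bI: "\<beta> * I = A - S" unfolding I_def using assms by simp
  have M11: "M$1$1 = - S" using J(1) bI by simp
  have M22: "M$2$2 = r * I / u^2"
  proof -
    have "M$2$2 = r/u - r*a/u^2" using J(4) Sm2 by simp
    also have "\<dots> = r * I / u^2"
    proof -
      have Iu: "I = u - a" unfolding u_def by simp
      show ?thesis unfolding Iu using upos by (simp add: field_simps power2_eq_square)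
    qed
    finally show ?thesis .
  qed
  show "si_field A r a \<mu> \<beta> E = 0"
  proof -
    have "\<beta> * I * S - \<mu> * I - r * I / (a + I) = I * (\<beta>*S - \<mu> - r/u)"
      unfolding u_def by (simp add: algebra_simps)
    also have "\<dots> = 0" using Sm2 by simp
    finally have z2: "\<beta> * I * S - \<mu> * I - r * I / (a + I) = 0" .
    have z1: "S * (A - S) - \<beta> * I * S = 0"
    proof -
      have "S * (A - S) - \<beta> * I * S = S * (A - S - \<beta> * I)" by (simp add: algebra_simps)
      then show ?thesis using bI by simp
    qed
    show ?thesis unfolding si_field_def Let_def E1 E2 z1 z2
      by (simp add: vec_eq_iff forall_2)
  qed
  show "M$1$1 + M$2$2 < 0"
  proof -
    have "I < u" unfolding u_def using assms by simp
    then have "r * I / u^2 < r * u / u^2" using upos assms by (simp add: divide_strict_right_mono)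
    also have "r * u / u^2 = r / u" using upos by (simp add: power2_eq_square)
    also have "\<dots> = \<beta>*S - \<mu>" using Sm2 by simp
    also have "\<dots> < S" using assms Spos
      by (smt (verit) mult_less_cancel_right2)
    finally show ?thesis using M11 M22 by simp
  qed
  show "M$1$1*M$2$2 - M$1$2*M$2$1 = S * ((A - S)/\<beta>) * \<beta>^2 * ((a*\<beta> + A - S)^2 - r) / (a*\<beta> + A - S)^2"
    unfolding M11 M22 J(2) J(3) I_def[symmetric] w_def[symmetric] wu
    using upos assms by (simp add: field_simps power2_eq_square)
  show "S > 0" by (rule Spos)
  show "(A - S)/\<beta> > 0" using Ipos I_def by simp
  show "a*\<beta> + A - S > 0" using wpos w_def by simp
qed

theorem lemma5p4:
  fixes A r a \<mu> \<beta>\<^sub>0 :: real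
  assumes "A > 0" "r > 0" "a > 0" "\<mu> > 0" "0 < \<beta>\<^sub>0" "\<beta>\<^sub>0 < 1"
  defines "\<Delta> \<equiv> (a * \<beta>\<^sub>0 + A - \<mu> / \<beta>\<^sub>0)^2 - 4 * r"
  defines "S\<^sub>3 \<equiv> (a * \<beta>\<^sub>0 + A + \<mu> / \<beta>\<^sub>0 - sqrt \<Delta>) / 2"
  defines "S\<^sub>4 \<equiv> (a * \<beta>\<^sub>0 + A + \<mu> / \<beta>\<^sub>0 + sqrt \<Delta>) / 2"
  assumes "\<Delta> > 0" "S\<^sub>3 < S\<^sub>4" "S\<^sub>4 < A"
  shows "is_sink (si_field A r a \<mu> \<beta>\<^sub>0) (state S\<^sub>3 ((A - S\<^sub>3) / \<beta>\<^sub>0))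
       \<and> is_saddle (si_field A r a \<mu> \<beta>\<^sub>0) (state S\<^sub>4 ((A - S\<^sub>4) / \<beta>\<^sub>0))"
proof -
  define p where "p = a * \<beta>\<^sub>0 + A"
  define m where "m = \<mu> / \<beta>\<^sub>0"
  define s where "s = sqrt \<Delta>"
  have s2: "s^2 = (p - m)^2 - 4*r" unfolding s_def p_def m_def \<Delta>_def using assms(10) \<Delta>_def by simp
  have spos: "s > 0" unfolding s_def using assms(10) by simp
  have S3: "S\<^sub>3 = (p + m - s)/2" unfolding S\<^sub>3_def p_def m_def s_def by simp
  have S4: "S\<^sub>4 = (p + m + s)/2" unfolding S\<^sub>4_def p_def m_def s_def by simp
  have prod: "(S - m) * (p - S) = r" if "S = (p + m - s)/2 \<or> S = (p + m + s)/2" for S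
  proof -
    have "(S - m) * (p - S) = ((p - m)^2 - (2*S - p - m)^2)/4" by (simp add: power2_eq_square algebra_simps)
    moreover have "2*S - p - m = s \<or> 2*S - p - m = -s" using that by auto
    then have "(2*S - p - m)^2 = s^2" by auto
    ultimately show ?thesis using s2 by simp
  qed
  have q3: "(S\<^sub>3 - \<mu>/\<beta>\<^sub>0) * (a*\<beta>\<^sub>0 + A - S\<^sub>3) = r"
    using prod[OF disjI1[OF S3]] unfolding p_def m_def by simp
  have q4: "(S\<^sub>4 - \<mu>/\<beta>\<^sub>0) * (a*\<beta>\<^sub>0 + A - S\<^sub>4) = r"
    using prod[OF disjI2[OF S4]] unfolding p_def m_def by simp
  have lt3: "S\<^sub>3 < A" using assms(11,12) by linarith
  note E3 = endemic[OF assms(3,2,4,5,6) lt3 q3]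
  note E4 = endemic[OF assms(3,2,4,5,6) assms(12) q4]
  define w3 where "w3 = a*\<beta>\<^sub>0 + A - S\<^sub>3"
  define w4 where "w4 = a*\<beta>\<^sub>0 + A - S\<^sub>4"
  have w3r: "w3^2 - r = w3 * s"
  proof -
    have "w3^2 - r = w3 * (w3 - (S\<^sub>3 - m))" using q3 unfolding w3_def m_def by (simp add: power2_eq_square algebra_simps)
    moreover have "w3 - (S\<^sub>3 - m) = s" unfolding w3_def S3 p_def by (simp add: field_simps)
    ultimately show ?thesis by simp
  qed
  have w4r: "w4^2 - r = - w4 * s"
  proof -
    have "w4^2 - r = w4 * (w4 - (S\<^sub>4 - m))" using q4 unfolding w4_def m_def by (simp add: power2_eq_square algebra_simps)
    moreover have "w4 - (S\<^sub>4 - m) = -s" unfolding w4_def S4 p_def by (simp add: field_simps)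
    ultimately show ?thesis by simp
  qed
  have d3: "S\<^sub>3 * ((A - S\<^sub>3)/\<beta>\<^sub>0) * \<beta>\<^sub>0^2 * ((a*\<beta>\<^sub>0 + A - S\<^sub>3)^2 - r) / (a*\<beta>\<^sub>0 + A - S\<^sub>3)^2 > 0"
    unfolding w3_def[symmetric] w3r using E3(4,5,6) spos lt3 assms(5) unfolding w3_def[symmetric]
    by (intro divide_pos_pos mult_pos_pos) simp_all
  have pos4: "0 < S\<^sub>4 * ((A - S\<^sub>4)/\<beta>\<^sub>0) * \<beta>\<^sub>0^2 * (w4 * s) / w4^2"
    using E4(4,5,6) spos assms(12) assms(5) unfolding w4_def[symmetric]
    by (intro divide_pos_pos mult_pos_pos) simp_all
  have d4: "S\<^sub>4 * ((A - S\<^sub>4)/\<beta>\<^sub>0) * \<beta>\<^sub>0^2 * ((a*\<beta>\<^sub>0 + A - S\<^sub>4)^2 - r) / (a*\<beta>\<^sub>0 + A - S\<^sub>4)^2 < 0"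
  proof -
    have "S\<^sub>4 * ((A - S\<^sub>4)/\<beta>\<^sub>0) * \<beta>\<^sub>0^2 * (- w4 * s) / w4^2
       = - (S\<^sub>4 * ((A - S\<^sub>4)/\<beta>\<^sub>0) * \<beta>\<^sub>0^2 * (w4 * s) / w4^2)" by simp
    then show ?thesis unfolding w4_def[symmetric] w4r using pos4 by linarith
  qed
  define M3 where "M3 = jacobian (si_field A r a \<mu> \<beta>\<^sub>0) (at (state S\<^sub>3 ((A - S\<^sub>3) / \<beta>\<^sub>0)))"
  define M4 where "M4 = jacobian (si_field A r a \<mu> \<beta>\<^sub>0) (at (state S\<^sub>4 ((A - S\<^sub>4) / \<beta>\<^sub>0)))"
  have t3: "M3$1$1 + M3$2$2 < 0" using E3(2) unfolding M3_def .
  have dd3: "M3$1$1*M3$2$2 - M3$1$2*M3$2$1 > 0" using E3(3) d3 unfolding M3_def by simp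
  have dd4: "M4$1$1*M4$2$2 - M4$1$2*M4$2$1 < 0" using E4(3) d4 unfolding M4_def by simp
  have sink: "is_sink (si_field A r a \<mu> \<beta>\<^sub>0) (state S\<^sub>3 ((A - S\<^sub>3) / \<beta>\<^sub>0))"
    unfolding is_sink_def eig2 M3_def[symmetric]
    using E3(1) sinkroots[OF t3 dd3] by blast
  obtain l1 l2 where l: "l1 < 0" "0 < l2"
     "(complex_of_real l1)^2 - complex_of_real (M4$1$1 + M4$2$2) * complex_of_real l1 + complex_of_real (M4$1$1*M4$2$2 - M4$1$2*M4$2$1) = 0"
     "(complex_of_real l2)^2 - complex_of_real (M4$1$1 + M4$2$2) * complex_of_real l2 + complex_of_real (M4$1$1*M4$2$2 - M4$1$2*M4$2$1) = 0"
    using saddleroots[OF dd4, of "M4$1$1 + M4$2$2"] by blast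
  have saddle: "is_saddle (si_field A r a \<mu> \<beta>\<^sub>0) (state S\<^sub>4 ((A - S\<^sub>4) / \<beta>\<^sub>0))"
    unfolding is_saddle_def eig2 M4_def[symmetric]
    using E4(1) l by blast
  show ?thesis using sink saddle by simp
qed

end
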